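(* Let $T\in SO(n)$ and suppose neither $1$ nor $-1$ is an eigenvalue of $T$. Then $T$ is real in $SO(n)$ if and only if $n\not\equiv 2\pmod 4$.
   Context: An element $g$ of a group $G$ is real in $G$ if there is $h\in G$ with $hgh^{-1}=g^{-1}$. *)

theory Defs
  imports "HOL-Analysis.Analysis"
begin

text \<open>The special orthogonal group SO(n), with n the cardinality of the index type.\<close>
definition SO :: "(real^'n^'n) set" where
  "SO = {A. orthogonal_matrix A \<and> det A = 1}"

definition mat_eigenvalue :: "real^'n^'n \<Rightarrow> real \<Rightarrow> bool" where
  "mat_eigenvalue A c \<longleftrightarrow> (\<exists>v. v \<noteq> 0 \<and> A *v v = c *\<^sub>R v)"

definition real_in :: "(real^'n^'n) set \<Rightarrow> real^'n^'n \<Rightarrow> bool" where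
  "real_in G g \<longleftrightarrow> (\<exists>h\<in>G. h ** g ** matrix_inv h = matrix_inv g)"

end

theory Submission
  imports Defs
begin


declare transpose_matrix_vector [simp del]

lemma inner_mtrans: "inner ((A::real^'n^'n) *v x) y = inner x (transpose A *v y)"
  by (metis dot_lmul_matrix vector_transpose_matrix)

lemma orth_TQ: "orthogonal_matrix (Q::real^'n^'n) \<Longrightarrow> transpose Q *v (Q *v x) = x"
  by (simp add: orthogonal_matrix_def matrix_vector_mul_assoc del: transpose_matrix_vector)

lemma orth_QT: "orthogonal_matrix (Q::real^'n^'n) \<Longrightarrow> Q *v (transpose Q *v x) = x"
  by (simp add: orthogonal_matrix_def matrix_vector_mul_assoc del: transpose_matrix_vector)

lemma orth_inner: "orthogonal_matrix (Q::real^'n^'n) \<Longrightarrow> inner (Q *v x) (Q *v y) = inner x y"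
  by (metis inner_mtrans orth_TQ)

lemma orth_norm: "orthogonal_matrix (Q::real^'n^'n) \<Longrightarrow> norm (Q *v x) = norm x"
  by (simp add: norm_eq_sqrt_inner orth_inner)

lemma minv_orth: "orthogonal_matrix (Q::real^'n^'n) \<Longrightarrow> matrix_inv Q = transpose Q"
proof -
  assume Q: "orthogonal_matrix Q"
  have ex: "\<exists>A'. Q ** A' = mat 1 \<and> A' ** Q = mat 1"
    using Q unfolding orthogonal_matrix_def by blast
  have s: "Q ** matrix_inv Q = mat 1 \<and> matrix_inv Q ** Q = mat 1"
    unfolding matrix_inv_def by (rule someI_ex[OF ex])
  have "matrix_inv Q = (transpose Q ** Q) ** matrix_inv Q"
    using Q by (simp add: orthogonal_matrix_def)
  also have "\<dots> = transpose Q"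
    using s by (simp add: matrix_mul_assoc[symmetric])
  finally show ?thesis .
qed

lemma mv_neg: "(A::real^'n^'m) *v (- x) = - (A *v x)"
  by (simp add: vec_eq_iff matrix_vector_mult_def sum_negf)

lemma smult_mv: "((a::real) *\<^sub>R (M::real^'n^'n)) *v x = a *\<^sub>R (M *v x)"
  by (simp add: scaleR_matrix_vector_assoc)

lemma det_nz_of_inj: "(\<And>x. (M::real^'n^'n) *v x = 0 \<Longrightarrow> x = 0) \<Longrightarrow> det M \<noteq> 0"
  by (metis invertible_det_nz matrix_left_invertible_ker invertible_left_inverse)

lemma ex_ker_of_det0: "det (M::real^'n^'n) = 0 \<Longrightarrow> \<exists>x. x \<noteq> 0 \<and> M *v x = 0"
  using det_nz_of_inj by blast

lemma det_neg_mat: "det (- (M::real^'n^'n)) = (-1) ^ CARD('n) * det M"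
proof -
  have "- M = (mat (-1)) ** M"
    by (simp add: vec_eq_iff matrix_matrix_mult_def mat_def if_distrib[where f="\<lambda>x. x * _"] sum.delta cong: if_cong)
  moreover have "det (mat (-1) :: real^'n^'n) = (-1) ^ CARD('n)"
    by (subst det_diagonal) (auto simp: mat_def)
  ultimately show ?thesis by (simp add: det_mul)
qed


locale oT =
  fixes T :: "real^'n^'n"
  assumes orthT: "orthogonal_matrix T" and detT: "det T = 1"
    and ne1: "\<And>v. T *v v = v \<Longrightarrow> v = 0"
    and nem1: "\<And>v. T *v v = - v \<Longrightarrow> v = 0"
begin

lemma no_real_eig: "T *v v = \<mu> *\<^sub>R v \<Longrightarrow> v = 0"
proof (rule ccontr)
  assume e: "T *v v = \<mu> *\<^sub>R v" and v: "v \<noteq> 0"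
  have "norm v = \<bar>\<mu>\<bar> * norm v" using orth_norm[OF orthT, of v] e by simp
  then have "\<bar>\<mu>\<bar> = 1" using v by simp
  then have "\<mu> = 1 \<or> \<mu> = -1" by auto
  then show False using e v ne1 nem1 by auto
qed

lemma n_even: "even CARD('n)"
proof (rule ccontr)
  assume odd: "\<not> even CARD('n)"
  have eq1: "T - mat 1 = T ** (mat 1 - transpose T)"
  proof -
    have "(T ** (mat 1 - transpose T)) *v x = (T - mat 1) *v x" for x
    proof -
      have "(T ** (mat 1 - transpose T)) *v x = T *v ((mat 1 - transpose T) *v x)"
        by (simp only: matrix_vector_mul_assoc)
      also have "\<dots> = T *v x - T *v (transpose T *v x)"
        by (simp only: matrix_vector_mult_diff_rdistrib matrix_vector_mul_lid matrix_vector_mult_diff_distrib)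
      also have "\<dots> = T *v x - x" using orth_QT[OF orthT] by simp
      finally show ?thesis by (simp add: matrix_vector_mult_diff_rdistrib)
    qed
    then show ?thesis by (simp add: matrix_eq)
  qed
  have eq2: "mat 1 - transpose T = transpose (- (T - mat 1))"
    by (simp add: transpose_def vec_eq_iff mat_def)
  have "det (T - mat 1) = det T * det (mat 1 - transpose T)"
    by (subst eq1) (rule det_mul)
  also have "det (mat 1 - transpose T) = (-1) ^ CARD('n) * det (T - mat 1)"
    by (simp only: eq2 det_transpose det_neg_mat)
  finally have "det (T - mat 1) = det T * ((-1) ^ CARD('n) * det (T - mat 1))" .
  then have "det (T - mat 1) = - det (T - mat 1)" using odd detT by (auto simp: neg_one_odd_power)
  then have "det (T - mat 1) = 0" by simp
  then obtain x where x: "x \<noteq> 0" "(T - mat 1) *v x = 0" using ex_ker_of_det0 by blast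
  then have "T *v x = x" by (simp add: algebra_simps)
  then show False using ne1 x by blast
qed

lemma inner_T: "inner (T *v x) y = inner x (transpose T *v y)" by (rule inner_mtrans)

lemma inner_Tt: "inner (transpose T *v x) y = inner x (T *v y)"
  using inner_mtrans[of "transpose T" x y] by simp

lemma TTt: "T *v (transpose T *v x) = x" using orth_QT[OF orthT] .
lemma TtT: "transpose T *v (T *v x) = x" using orth_TQ[OF orthT] .

end

lemma cont_det:
  fixes F :: "real \<Rightarrow> real^'n^'n"
  assumes "\<And>i j. continuous_on S (\<lambda>s. F s $ i $ j)"
  shows "continuous_on S (\<lambda>s. det (F s))"
  unfolding det_def by (intro continuous_intros assms)

lemma ivt_pos:
  fixes g :: "real \<Rightarrow> real"
  assumes "continuous_on {0..1} g" "\<And>s. s \<in> {0..1} \<Longrightarrow> g s \<noteq> 0" "g 0 > 0"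
  shows "g 1 > 0"
proof (rule ccontr)
  assume "\<not> g 1 > 0"
  then have "g 1 \<le> 0" by simp
  then obtain x where "0 \<le> x" "x \<le> 1" "g x = 0"
    using IVT2'[of g 1 0 0] assms by auto
  then show False using assms(2) by auto
qed




lemma solve_lin:
  fixes w z :: "'a::real_vector"
  assumes q: "(q::real) \<noteq> 0" and eq: "p *\<^sub>R w + q *\<^sub>R z = 0"
  shows "z = (- p / q) *\<^sub>R w"
proof -
  have qz: "q *\<^sub>R z = - (p *\<^sub>R w)" using eq by (simp add: eq_neg_iff_add_eq_0 add.commute)
  have "z = (1/q) *\<^sub>R (q *\<^sub>R z)" using q by simp
  also have "\<dots> = (- p / q) *\<^sub>R w" by (simp only: qz) simp
  finally show ?thesis .
qed

context oT begin


lemma det_comm: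
  assumes c: "orthogonal_matrix c" and cT: "\<And>x. c *v (T *v x) = T *v (c *v x)"
  shows "det c = 1"
proof -
  have ct: "orthogonal_matrix (transpose c)" using c by simp
  have ctT: "transpose c *v (T *v x) = T *v (transpose c *v x)" for x
  proof -
    have "T *v (transpose c *v x) = transpose c *v (c *v (T *v (transpose c *v x)))"
      using orth_TQ[OF c] by simp
    also have "\<dots> = transpose c *v (T *v (c *v (transpose c *v x)))" by (simp add: cT)
    also have "\<dots> = transpose c *v (T *v x)" using orth_QT[OF c] by simp
    finally show ?thesis by simp
  qed
  \<comment> \<open>normality: eigen-relations transfer to the transpose\<close>
  have adj: "transpose c *v v = a *\<^sub>R v + b *\<^sub>R (transpose T *v v)"
    if e: "c *v v = a *\<^sub>R v + b *\<^sub>R (T *v v)" for v a b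
  proof -
    let ?u = "transpose c *v v - a *\<^sub>R v - b *\<^sub>R (transpose T *v v)"
    let ?m = "c *v v - a *\<^sub>R v - b *\<^sub>R (T *v v)"
    have m0: "?m = 0" using e by simp
    have f1: "inner (transpose c *v v) (transpose c *v v) = inner v v" using orth_inner[OF ct] .
    have f2: "inner (c *v v) (c *v v) = inner v v" using orth_inner[OF c] .
    have f3: "inner (transpose T *v v) (transpose T *v v) = inner v v"
      using orth_inner[of "transpose T"] orthT by simp
    have f4: "inner (T *v v) (T *v v) = inner v v" using orth_inner[OF orthT] .
    have f5: "inner (transpose c *v v) v = inner v (c *v v)"
      using inner_mtrans[of "transpose c" v v] by simp
    have f6: "inner (transpose c *v v) (transpose T *v v) = inner (T *v v) (c *v v)"
    proof -
      have "inner (transpose c *v v) (transpose T *v v) = inner (T *v (transpose c *v v)) v"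
        by (simp add: inner_T)
      also have "\<dots> = inner (transpose c *v (T *v v)) v" by (simp add: ctT)
      also have "\<dots> = inner (T *v v) (c *v v)" using inner_mtrans[of "transpose c" "T *v v" v] by simp
      finally show ?thesis .
    qed
    have f7: "inner v (transpose T *v v) = inner (T *v v) v" by (simp add: inner_T)
    have "inner ?u ?u = inner ?m ?m"
      apply (simp only: inner_diff_left inner_diff_right inner_scaleR_left inner_scaleR_right)
      apply (simp only: f1 f2 f3 f4 f5 f6 f7)
      apply (simp add: inner_commute[of v "transpose c *v v"] inner_commute[of v "c *v v"]
          inner_commute[of "transpose T *v v" "transpose c *v v"] inner_commute[of "T *v v" "c *v v"]
          inner_commute[of v "T *v v"] inner_commute[of "transpose T *v v" v] f5 f6 f7)
      done
    then have "inner ?u ?u = 0" using m0 by simp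
    then have "?u = 0" by simp
    then show ?thesis by (metis diff_diff_eq eq_iff_diff_eq_0)
  qed
  define E where "E = {p::real\<times>real. \<exists>v. v \<noteq> 0 \<and> c *v v = fst p *\<^sub>R v + snd p *\<^sub>R (T *v v)}"
  have orth: "inner v1 v2 = 0"
    if p: "(a1, b1) \<noteq> (a2, b2)" and e1: "c *v v1 = a1 *\<^sub>R v1 + b1 *\<^sub>R (T *v v1)"
      and e2: "c *v v2 = a2 *\<^sub>R v2 + b2 *\<^sub>R (T *v v2)" for a1 b1 a2 b2 v1 v2
  proof -
    define N where "N = (\<lambda>w. (a1 - a2) *\<^sub>R w + (b1 - b2) *\<^sub>R (T *v w))"
    have linN: "linear N" unfolding N_def
      by (simp add: linear_iff algebra_simps)
    have injN: "inj N"
    proof (rule linear_injective_0[OF linN, THEN iffD2])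
      show "\<forall>w. N w = 0 \<longrightarrow> w = 0"
      proof (intro allI impI)
        fix w assume "N w = 0"
        then have h: "(a1 - a2) *\<^sub>R w + (b1 - b2) *\<^sub>R (T *v w) = 0" by (simp add: N_def)
        show "w = 0"
        proof (cases "b1 = b2")
          case True
          then have "a1 \<noteq> a2" using p by auto
          then show ?thesis using h True by simp
        next
          case False
          then have "T *v w = (- (a1 - a2) / (b1 - b2)) *\<^sub>R w"
            using solve_lin[OF _ h] by simp
          then show ?thesis by (rule no_real_eig)
        qed
      qed
    qed
    have "surj N" using linear_injective_imp_surjective[OF linN injN] by simp
    then obtain w0 where w0: "N w0 = v1" by (metis surjD)
    define M where "M = (\<lambda>w. c *v w - a1 *\<^sub>R w - b1 *\<^sub>R (T *v w))"
    have "N (M w0) = M (N w0)"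
      unfolding N_def M_def by (simp add: algebra_simps cT)
    also have "\<dots> = 0" using w0 e1 by (simp add: M_def)
    finally have "N (M w0) = 0" .
    then have "M w0 = 0" using injN linear_0[OF linN] by (metis injD)
    then have ew: "c *v w0 = a1 *\<^sub>R w0 + b1 *\<^sub>R (T *v w0)" by (simp add: M_def algebra_simps)
    have "inner (c *v w0) v2 = inner w0 (transpose c *v v2)" by (rule inner_mtrans)
    also have "\<dots> = a2 * inner w0 v2 + b2 * inner (T *v w0) v2"
      using adj[OF e2] by (simp add: inner_add_right inner_T)
    finally have "a1 * inner w0 v2 + b1 * inner (T *v w0) v2 = a2 * inner w0 v2 + b2 * inner (T *v w0) v2"
      using ew by (simp add: inner_add_left)
    then have "inner (N w0) v2 = 0" by (simp add: N_def inner_add_left algebra_simps)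
    then show ?thesis using w0 by simp
  qed
  have finE: "finite E"
  proof -
    define f where "f = (\<lambda>p::real\<times>real. SOME v. v \<noteq> 0 \<and> c *v v = fst p *\<^sub>R v + snd p *\<^sub>R (T *v v))"
    have fp: "f p \<noteq> 0 \<and> c *v f p = fst p *\<^sub>R f p + snd p *\<^sub>R (T *v f p)" if "p \<in> E" for p
    proof -
      have "\<exists>v. v \<noteq> 0 \<and> c *v v = fst p *\<^sub>R v + snd p *\<^sub>R (T *v v)" using that unfolding E_def by simp
      then show ?thesis unfolding f_def by (rule someI_ex)
    qed
    have fo: "inner (f p) (f q) = 0" if "p \<in> E" "q \<in> E" "p \<noteq> q" for p q
      using orth[of "fst p" "snd p" "fst q" "snd q" "f p" "f q"] fp[OF that(1)] fp[OF that(2)] that(3)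
      by (cases p, cases q) auto
    have inj: "inj_on f E"
    proof (rule inj_onI)
      fix p q assume pq: "p \<in> E" "q \<in> E" "f p = f q"
      show "p = q"
      proof (rule ccontr)
        assume "p \<noteq> q"
        then have "inner (f p) (f p) = 0" using fo[OF pq(1,2)] pq(3) by simp
        then show False using fp[OF pq(1)] by simp
      qed
    qed
    have "pairwise orthogonal (f ` E)"
      unfolding pairwise_def orthogonal_def using fo by fastforce
    moreover have "0 \<notin> f ` E" using fp by fastforce
    ultimately have "independent (f ` E)" by (rule pairwise_orthogonal_independent)
    then have "finite (f ` E)" by (rule finiteI_independent)
    then show ?thesis using inj finite_imageD by blast
  qed
  obtain x0 where x0: "x0 \<notin> (\<lambda>p. fst p / snd p) ` E"
    using ex_new_if_finite[OF infinite_UNIV_char_0 finite_imageI[OF finE]] by blast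
  have ray: "(l * x0, l) \<notin> E" if "l > 0" for l
  proof
    assume "(l * x0, l) \<in> E"
    then have "(l * x0) / l \<in> (\<lambda>p. fst p / snd p) ` E" by force
    then show False using x0 that by simp
  qed
  define N0 where "N0 = x0 *\<^sub>R mat 1 + T"
  have N0v: "N0 *v y = x0 *\<^sub>R y + T *v y" for y
    by (simp add: N0_def matrix_vector_mult_add_rdistrib smult_mv)
  have detN0: "det N0 > 0"
  proof -
    let ?g = "\<lambda>s. det ((1 - s) *\<^sub>R mat 1 + s *\<^sub>R N0)"
    have "continuous_on {0..1} ?g"
      by (rule cont_det) (simp, intro continuous_intros)
    moreover have "?g s \<noteq> 0" if "s \<in> {0..1}" for s
    proof (rule det_nz_of_inj)
      fix y assume h: "((1 - s) *\<^sub>R mat 1 + s *\<^sub>R N0) *v y = 0"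
      then have h2: "(1 - s + s * x0) *\<^sub>R y + s *\<^sub>R (T *v y) = 0"
        by (simp add: matrix_vector_mult_add_rdistrib smult_mv N0v algebra_simps)
      show "y = 0"
      proof (cases "s = 0")
        case True then show ?thesis using h2 by simp
      next
        case False
        then have "T *v y = (- (1 - s + s * x0) / s) *\<^sub>R y"
          using solve_lin[OF _ h2] by simp
        then show ?thesis by (rule no_real_eig)
      qed
    qed
    moreover have "?g 0 > 0" by simp
    ultimately have "?g 1 > 0" by (rule ivt_pos)
    then show ?thesis by simp
  qed
  let ?k = "\<lambda>s. det ((1 - (1 - s)) *\<^sub>R c - (1 - s) *\<^sub>R N0)"
  have "continuous_on {0..1} ?k"
    by (rule cont_det) (simp, intro continuous_intros)
  moreover have "?k s \<noteq> 0" if s: "s \<in> {0..1}" for s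
  proof (rule det_nz_of_inj)
    fix y assume h: "((1 - (1 - s)) *\<^sub>R c - (1 - s) *\<^sub>R N0) *v y = 0"
    then have h2: "s *\<^sub>R (c *v y) = ((1 - s) * x0) *\<^sub>R y + (1 - s) *\<^sub>R (T *v y)"
      by (simp add: matrix_vector_mult_diff_rdistrib smult_mv N0v algebra_simps)
    consider "s = 0" | "s = 1" | "0 < s" "s < 1" using s by fastforce
    then show "y = 0"
    proof cases
      case 1
      then have "T *v y = (- x0) *\<^sub>R y" using h2 by (simp add: eq_neg_iff_add_eq_0 add.commute)
      then show ?thesis by (rule no_real_eig)
    next
      case 2
      then have "c *v y = 0" using h2 by simp
      then have "norm y = 0" using orth_norm[OF c, of y] by simp
      then show ?thesis by simp
    next
      case 3
      let ?l = "(1 - s) / s"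
      have "c *v y = (?l * x0) *\<^sub>R y + ?l *\<^sub>R (T *v y)"
      proof -
        have "c *v y = (1 / s) *\<^sub>R (s *\<^sub>R (c *v y))" using 3 by simp
        also have "\<dots> = (?l * x0) *\<^sub>R y + ?l *\<^sub>R (T *v y)"
          by (subst h2) (simp add: scaleR_add_right)
        finally show ?thesis .
      qed
      moreover have "?l > 0" using 3 by simp
      ultimately show ?thesis using ray[of ?l] unfolding E_def by auto
    qed
  qed
  moreover have "?k 0 > 0"
    using detN0 n_even by (simp add: det_neg_mat)
  ultimately have "?k 1 > 0" by (rule ivt_pos)
  then have "det c > 0" by simp
  then show ?thesis using det_orthogonal_matrix[OF c] by auto
qed

end



lemma sym_eig:
  fixes B :: "real^'n \<Rightarrow> real^'n"
  assumes linB: "linear B" and symB: "\<And>x y. inner (B x) y = inner x (B y)"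
    and U: "subspace U" and Uinv: "\<And>x. x \<in> U \<Longrightarrow> B x \<in> U" and u0: "u0 \<in> U" "u0 \<noteq> 0"
  shows "\<exists>v\<in>U. norm v = 1 \<and> (\<exists>l. B v = l *\<^sub>R v)"
proof -
  let ?K = "sphere 0 1 \<inter> U"
  have cK: "compact ?K" using closed_subspace[OF U] by (intro compact_Int_closed compact_sphere)
  have neK: "?K \<noteq> {}"
  proof -
    have "u0 /\<^sub>R norm u0 \<in> ?K" using u0 U by (simp add: subspace_scale)
    then show ?thesis by blast
  qed
  have contf: "continuous_on ?K (\<lambda>v. inner (B v) v)"
    by (intro continuous_intros linear_continuous_on linear_conv_bounded_linear[THEN iffD1] linB)
  obtain v where vK: "v \<in> ?K" and vmax: "\<And>y. y \<in> ?K \<Longrightarrow> inner (B y) y \<le> inner (B v) v"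
    using continuous_attains_sup[OF cK neK contf] by blast
  define \<mu> where "\<mu> = inner (B v) v"
  have vU: "v \<in> U" and nv: "norm v = 1" using vK by auto
  have vv: "inner v v = 1" using nv by (simp add: norm_eq_1)
  have bound: "inner (B u) u \<le> \<mu> * inner u u" if uU: "u \<in> U" for u
  proof (cases "u = 0")
    case True then show ?thesis using linear_0[OF linB] by simp
  next
    case False
    let ?u = "u /\<^sub>R norm u"
    have "?u \<in> ?K" using uU False U by (simp add: subspace_scale)
    then have "inner (B ?u) ?u \<le> \<mu>" using vmax \<mu>_def by blast
    moreover have "inner (B ?u) ?u = inner (B u) u / (norm u)^2"
      using False by (simp add: linear_scale[OF linB] power2_eq_square field_simps)
    ultimately have "inner (B u) u / (norm u)^2 \<le> \<mu>" by simp
    moreover have "(norm u)^2 > 0" using False by simp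
    ultimately have "inner (B u) u \<le> \<mu> * (norm u)^2" by (simp add: divide_le_eq)
    then show ?thesis by (simp add: power2_norm_eq_inner)
  qed
  define w where "w = B v - \<mu> *\<^sub>R v"
  have wU: "w \<in> U" unfolding w_def using Uinv[OF vU] vU U by (simp add: subspace_diff subspace_scale)
  have wv: "inner w v = 0" unfolding w_def by (simp add: inner_diff_left \<mu>_def vv)
  have Bvw: "inner (B v) w = inner w w"
  proof -
    have "inner w w = inner (B v) w - \<mu> * inner v w" unfolding w_def[of] by (simp add: inner_diff_left)
    moreover have "inner v w = 0" using wv by (simp add: inner_commute)
    ultimately show ?thesis by simp
  qed
  define a where "a = inner w w"
  define C where "C = \<mu> * a - inner (B w) w"
  have key: "2 * t * a \<le> t^2 * C" for t
  proof -
    have uU: "v + t *\<^sub>R w \<in> U" using vU wU U by (simp add: subspace_add subspace_scale)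
    have l: "inner (B (v + t *\<^sub>R w)) (v + t *\<^sub>R w) = \<mu> + 2 * t * a + t^2 * inner (B w) w"
    proof -
      have "inner (B w) v = inner (B v) w" using symB[of w v] by (simp add: inner_commute)
      then show ?thesis
        by (simp add: linear_add[OF linB] linear_scale[OF linB] inner_add_left inner_add_right
            \<mu>_def Bvw a_def power2_eq_square algebra_simps)
    qed
    have r: "inner (v + t *\<^sub>R w) (v + t *\<^sub>R w) = 1 + t^2 * a"
      using wv by (simp add: inner_add_left inner_add_right vv a_def inner_commute power2_eq_square)
    show ?thesis using bound[OF uU] unfolding l r C_def by (simp add: algebra_simps)
  qed
  have "a = 0"
  proof (rule ccontr)
    assume "a \<noteq> 0"
    then have apos: "a > 0" unfolding a_def by (simp add: order_less_le)
    define t where "t = a / (\<bar>C\<bar> + 1)"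
    have tpos: "t > 0" using apos by (simp add: t_def)
    have "2 * t * a \<le> t^2 * C" by (rule key)
    then have "2 * a \<le> t * C" using tpos by (simp add: power2_eq_square mult.assoc)
    also have "\<dots> \<le> t * \<bar>C\<bar>" using tpos by (simp add: mult_left_mono)
    also have "\<dots> = a * (\<bar>C\<bar> / (\<bar>C\<bar> + 1))" by (simp add: t_def)
    also have "\<dots> \<le> a * 1" using apos by (intro mult_left_mono) auto
    finally show False using apos by simp
  qed
  then have "w = 0" unfolding a_def by simp
  then have "B v = \<mu> *\<^sub>R v" unfolding w_def by simp
  then show ?thesis using vU nv by blast
qed

definition refl :: "real^'n \<Rightarrow> real^'n^'n" where
  "refl w = matrix (\<lambda>x. x - (2 * inner w x) *\<^sub>R w)"

lemma refl_apply: "refl w *v x = x - (2 * inner w x) *\<^sub>R w"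
proof -
  have "linear (\<lambda>x. x - (2 * inner w x) *\<^sub>R w)"
    by (simp add: linear_iff inner_add_right algebra_simps scaleR_add_left)
  from matrix_vector_mul(2)[OF this] show ?thesis unfolding refl_def by metis
qed

lemma refl_orth:
  assumes "norm w = 1" shows "orthogonal_matrix (refl w)"
proof -
  have ww: "inner w w = 1" using assms by (simp add: norm_eq_1)
  have lin: "linear (\<lambda>x. x - (2 * inner w x) *\<^sub>R w)"
    by (simp add: linear_iff inner_add_right algebra_simps scaleR_add_left)
  have "orthogonal_transformation (\<lambda>x. x - (2 * inner w x) *\<^sub>R w)"
    unfolding orthogonal_transformation_def
    using lin ww by (simp add: inner_diff_left inner_diff_right inner_commute algebra_simps)
  then show ?thesis unfolding refl_def orthogonal_transformation_matrix by simp
qed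

lemma refl_det:
  assumes nw: "norm (w::real^'n) = 1" shows "det (refl w) = -1"
proof -
  fix k :: 'n
  obtain Q where Q: "orthogonal_matrix Q" "Q *v axis k 1 = w"
    using orthogonal_matrix_exists_basis[OF nw] by blast
  define D :: "real^'n^'n" where "D = (\<chi> i j. if i = j then (if i = k then -1 else 1) else 0)"
  have ax: "inner (axis k 1) y = y $ k" for y :: "real^'n"
    by (metis cart_eq_inner_axis inner_commute)
  have Dv: "D *v y = y - (2 * inner (axis k 1) y) *\<^sub>R axis k 1" for y
    unfolding ax by (simp add: vec_eq_iff D_def matrix_vector_mult_def if_distrib[where f="\<lambda>x. x * _"]
        sum.delta axis_def cong: if_cong)
  have "refl w = Q ** D ** transpose Q"
  proof (subst matrix_eq, intro allI)
    fix x
    have "(Q ** D ** transpose Q) *v x = Q *v (D *v (transpose Q *v x))"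
      by (simp add: matrix_vector_mul_assoc matrix_mul_assoc)
    also have "\<dots> = x - (2 * inner (axis k 1) (transpose Q *v x)) *\<^sub>R w"
      by (simp add: Dv matrix_vector_mult_diff_distrib matrix_vector_mult_scaleR orth_QT[OF Q(1)] Q(2))
    also have "inner (axis k 1) (transpose Q *v x) = inner w x"
      using inner_mtrans[of Q "axis k 1" x] Q(2) by simp
    finally show "refl w *v x = (Q ** D ** transpose Q) *v x" by (simp add: refl_apply)
  qed
  then have "det (refl w) = det Q * det D * det Q" by (simp add: det_mul)
  moreover have "det D = -1"
    by (subst det_diagonal) (simp_all add: D_def prod.If_cases)
  moreover have "det Q * det Q = 1" using det_orthogonal_matrix[OF Q(1)] by auto
  ultimately show ?thesis by simp
qed




context oT begin


lemma constr:
  "\<forall>U. subspace U \<and> dim U = 2 * k \<and> (\<forall>x\<in>U. T *v x \<in> U) \<and> (\<forall>x\<in>U. transpose T *v x \<in> U) \<longrightarrow>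
    (\<exists>h. orthogonal_matrix h \<and> det h = (-1) ^ k \<and> (\<forall>x\<in>U. h *v (T *v x) = transpose T *v (h *v x))
       \<and> (\<forall>x\<in>U. h *v x \<in> U) \<and> (\<forall>x. (\<forall>u\<in>U. orthogonal u x) \<longrightarrow> h *v x = x))"
proof (induction k)
  case 0
  show ?case
  proof (intro allI impI)
    fix U :: "(real^'n) set"
    assume "subspace U \<and> dim U = 2 * 0 \<and> (\<forall>x\<in>U. T *v x \<in> U) \<and> (\<forall>x\<in>U. transpose T *v x \<in> U)"
    then have U0: "U \<subseteq> {0}" by simp
    show "\<exists>h. orthogonal_matrix h \<and> det h = (-1) ^ 0 \<and> (\<forall>x\<in>U. h *v (T *v x) = transpose T *v (h *v x))
       \<and> (\<forall>x\<in>U. h *v x \<in> U) \<and> (\<forall>x. (\<forall>u\<in>U. orthogonal u x) \<longrightarrow> h *v x = x)"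
      by (rule exI[of _ "mat 1"]) (use U0 in \<open>auto simp: orthogonal_matrix_id\<close>)
  qed
next
  case (Suc k)
  show ?case
  proof (intro allI impI)
    fix U :: "(real^'n) set"
    assume asm: "subspace U \<and> dim U = 2 * Suc k \<and> (\<forall>x\<in>U. T *v x \<in> U) \<and> (\<forall>x\<in>U. transpose T *v x \<in> U)"
    then have U: "subspace U" and dU: "dim U = 2 * Suc k" and TU: "\<And>x. x \<in> U \<Longrightarrow> T *v x \<in> U"
      and TtU: "\<And>x. x \<in> U \<Longrightarrow> transpose T *v x \<in> U" by auto
    have "dim U \<noteq> 0" using dU by simp
    then have "\<not> U \<subseteq> {0}" by (simp only: dim_eq_0 simp_thms)
    then obtain u0 where u0: "u0 \<in> U" "u0 \<noteq> 0" by blast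
    define B where "B = (\<lambda>x. T *v x + transpose T *v x)"
    have linB: "linear B" unfolding B_def by (simp add: linear_iff algebra_simps)
    have symB: "inner (B x) y = inner x (B y)" for x y
      unfolding B_def by (simp add: inner_add_left inner_add_right inner_T inner_Tt add.commute)
    obtain v l where vU: "v \<in> U" and nv: "norm v = 1" and Bv: "B v = l *\<^sub>R v"
      using sym_eig[OF linB symB U _ u0] TU TtU unfolding B_def
      by (metis (no_types, lifting) U subspace_add)
    have vv: "inner v v = 1" using nv by (simp add: norm_eq_1)
    define \<alpha> where "\<alpha> = inner (T *v v) v"
    define z where "z = T *v v - \<alpha> *\<^sub>R v"
    have zne: "z \<noteq> 0"
    proof
      assume "z = 0"
      then have "T *v v = \<alpha> *\<^sub>R v" unfolding z_def by simp
      then have "v = 0" by (rule no_real_eig)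
      then show False using nv by simp
    qed
    define \<beta> where "\<beta> = norm z"
    have bpos: "\<beta> > 0" using zne by (simp add: \<beta>_def)
    define w where "w = (1 / \<beta>) *\<^sub>R z"
    have nw: "norm w = 1" using bpos by (simp add: w_def \<beta>_def)
    have ww: "inner w w = 1" using nw by (simp add: norm_eq_1)
    have zb: "z = \<beta> *\<^sub>R w" using bpos by (simp add: w_def)
    have Tv: "T *v v = \<alpha> *\<^sub>R v + \<beta> *\<^sub>R w" using zb unfolding z_def by (simp add: algebra_simps)
    have vw: "inner v w = 0"
    proof -
      have "inner v z = 0" unfolding z_def \<alpha>_def by (simp add: inner_diff_right vv inner_commute)
      then show ?thesis using bpos zb by simp
    qed
    have wv: "inner w v = 0" using vw by (simp add: inner_commute)
    have l2: "l = 2 * \<alpha>"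
    proof -
      have "inner (B v) v = l" using Bv vv by simp
      moreover have "inner (B v) v = 2 * \<alpha>" unfolding B_def \<alpha>_def inner_add_left inner_Tt
        by (simp add: inner_commute[of v "T *v v"])
      ultimately show ?thesis by simp
    qed
    have Ttv0: "transpose T *v v = l *\<^sub>R v - T *v v"
      using Bv unfolding B_def by (simp add: eq_diff_eq add.commute)
    have Ttv: "transpose T *v v = \<alpha> *\<^sub>R v - \<beta> *\<^sub>R w"
      unfolding Ttv0 Tv l2 by (simp add: vec_eq_iff algebra_simps)
    have ab: "\<alpha>^2 + \<beta>^2 = 1"
    proof -
      have "inner (T *v v) (T *v v) = 1" using orth_inner[OF orthT] vv by simp
      then show ?thesis unfolding Tv
        by (simp add: inner_add_left inner_add_right vv ww vw wv power2_eq_square)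
    qed
    have Tv0: "T *v v = l *\<^sub>R v - transpose T *v v"
      using Bv unfolding B_def by (simp add: eq_diff_eq)
    have TTv: "T *v (T *v v) = l *\<^sub>R (T *v v) - v"
    proof -
      have "T *v (T *v v) = T *v (l *\<^sub>R v - transpose T *v v)" by (simp only: Tv0[symmetric])
      also have "\<dots> = l *\<^sub>R (T *v v) - v"
        by (simp only: matrix_vector_mult_diff_distrib matrix_vector_mult_scaleR TTt)
      finally show ?thesis .
    qed
    have Tw: "T *v w = (- \<beta>) *\<^sub>R v + \<alpha> *\<^sub>R w"
    proof -
      have "\<beta> *\<^sub>R (T *v w) = T *v (T *v v) - \<alpha> *\<^sub>R (T *v v)"
        using zb unfolding z_def by (metis matrix_vector_mult_diff_distrib matrix_vector_mult_scaleR)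
      also have "\<dots> = (\<alpha>^2 - 1) *\<^sub>R v + (\<alpha> * \<beta>) *\<^sub>R w"
        unfolding TTv unfolding l2 Tv by (simp add: vec_eq_iff algebra_simps power2_eq_square)
      also have "\<dots> = \<beta> *\<^sub>R ((- \<beta>) *\<^sub>R v + \<alpha> *\<^sub>R w)"
        using ab unfolding vec_eq_iff by (simp add: algebra_simps) algebra
      finally show ?thesis using bpos by simp
    qed
    have Ttw: "transpose T *v w = \<beta> *\<^sub>R v + \<alpha> *\<^sub>R w"
    proof -
      have "\<beta> *\<^sub>R (transpose T *v w) = transpose T *v (T *v v) - \<alpha> *\<^sub>R (transpose T *v v)"
        using zb unfolding z_def by (metis matrix_vector_mult_diff_distrib matrix_vector_mult_scaleR)
      also have "\<dots> = (1 - \<alpha>^2) *\<^sub>R v + (\<alpha> * \<beta>) *\<^sub>R w"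
        unfolding TtT unfolding Ttv by (simp add: vec_eq_iff algebra_simps power2_eq_square)
      also have "\<dots> = \<beta> *\<^sub>R (\<beta> *\<^sub>R v + \<alpha> *\<^sub>R w)"
        using ab unfolding vec_eq_iff by (simp add: algebra_simps) algebra
      finally show ?thesis using bpos by simp
    qed
    have wU: "w \<in> U" unfolding w_def z_def using U vU TU[OF vU]
      by (simp add: subspace_scale subspace_diff)
    define U' where "U' = {y \<in> U. orthogonal v y \<and> orthogonal w y}"
    have U'alt: "U' = {y \<in> U. \<forall>x \<in> span {v, w}. orthogonal x y}"
      unfolding U'_def
    proof (intro Collect_cong conj_cong refl iffI)
      fix y assume "orthogonal v y \<and> orthogonal w y"
      then show "\<forall>x\<in>span {v, w}. orthogonal x y"
        using orthogonal_to_span[of _ "{v,w}" y] by (auto simp: orthogonal_commute)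
    next
      fix y assume "\<forall>x\<in>span {v, w}. orthogonal x y"
      then show "orthogonal v y \<and> orthogonal w y" by (simp add: span_base)
    qed
    have U'sub: "subspace U'" unfolding U'alt
      using U by (auto simp: subspace_def orthogonal_clauses)
    have "dim U' + dim (span {v, w}) = dim U"
      unfolding U'alt
      by (rule dim_subspace_orthogonal_to_vectors) (use U vU wU in \<open>auto simp: span_minimal\<close>)
    moreover have "dim (span {v, w}) = 2"
    proof -
      have vnw: "v \<noteq> w" using vw vv by auto
      have "independent {v, w}"
        by (rule pairwise_orthogonal_independent) (use vw wv vv ww in \<open>auto simp: pairwise_def orthogonal_def\<close>)
      then show ?thesis using vnw by (simp add: dim_eq_card_independent)
    qed
    ultimately have dU': "dim U' = 2 * k" using dU by simp
    have TU': "T *v y \<in> U'" if "y \<in> U'" for y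
    proof -
      have y: "y \<in> U" "inner v y = 0" "inner w y = 0" using that unfolding U'_def orthogonal_def by auto
      have "inner v (T *v y) = inner (transpose T *v v) y" by (simp add: inner_Tt)
      also have "\<dots> = 0" unfolding Ttv using y by (simp add: inner_add_left inner_diff_left)
      finally have 1: "inner v (T *v y) = 0" .
      have "inner w (T *v y) = inner (transpose T *v w) y" by (simp add: inner_Tt)
      also have "\<dots> = 0" unfolding Ttw using y by (simp add: inner_add_left inner_diff_left)
      finally have 2: "inner w (T *v y) = 0" .
      show ?thesis using TU[OF y(1)] 1 2 unfolding U'_def orthogonal_def by simp
    qed
    have TtU': "transpose T *v y \<in> U'" if "y \<in> U'" for y
    proof -
      have y: "y \<in> U" "inner v y = 0" "inner w y = 0" using that unfolding U'_def orthogonal_def by auto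
      have "inner v (transpose T *v y) = inner (T *v v) y" by (simp add: inner_T)
      also have "\<dots> = 0" unfolding Tv using y by (simp add: inner_add_left inner_diff_left)
      finally have 1: "inner v (transpose T *v y) = 0" .
      have "inner w (transpose T *v y) = inner (T *v w) y" by (simp add: inner_T)
      also have "\<dots> = 0" unfolding Tw using y by (simp add: inner_add_left inner_diff_left)
      finally have 2: "inner w (transpose T *v y) = 0" .
      show ?thesis using TtU[OF y(1)] 1 2 unfolding U'_def orthogonal_def by simp
    qed
    have pre: "subspace U' \<and> dim U' = 2 * k \<and> (\<forall>x\<in>U'. T *v x \<in> U') \<and> (\<forall>x\<in>U'. transpose T *v x \<in> U')"
      using U'sub dU' TU' TtU' by simp
    obtain h' where h'o: "orthogonal_matrix h'" and h'd: "det h' = (-1) ^ k"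
      and h'T0: "\<forall>x\<in>U'. h' *v (T *v x) = transpose T *v (h' *v x)"
      and h'U0: "\<forall>x\<in>U'. h' *v x \<in> U'"
      and h'id0: "\<forall>x. (\<forall>u\<in>U'. orthogonal u x) \<longrightarrow> h' *v x = x"
      using Suc.IH[rule_format, OF pre] by (elim exE conjE) (rule that)
    have h'T: "\<And>x. x \<in> U' \<Longrightarrow> h' *v (T *v x) = transpose T *v (h' *v x)" using h'T0 by (rule bspec)
    have h'U: "\<And>x. x \<in> U' \<Longrightarrow> h' *v x \<in> U'" using h'U0 by (rule bspec)
    have h'id: "\<And>x. (\<forall>u\<in>U'. orthogonal u x) \<Longrightarrow> h' *v x = x" using h'id0 by blast
    define h where "h = refl w ** h'"
    have hx: "h *v x = h' *v x - (2 * inner w (h' *v x)) *\<^sub>R w" for x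
      by (simp add: h_def matrix_vector_mul_assoc[symmetric] refl_apply)
    have h'v: "h' *v v = v"
      by (rule h'id) (auto simp: U'_def orthogonal_commute)
    have h'w: "h' *v w = w"
      by (rule h'id) (auto simp: U'_def orthogonal_commute)
    have hv: "h *v v = v" using hx[of v] h'v wv by simp
    have hw: "h *v w = - w"
    proof -
      have "h *v w = w - (2::real) *\<^sub>R w" using hx[of w] h'w ww by simp
      then show ?thesis by (simp add: vec_eq_iff)
    qed
    have hu: "h *v u = h' *v u" if "u \<in> U'" for u
    proof -
      have "inner w (h' *v u) = 0" using h'U[OF that] unfolding U'_def orthogonal_def by simp
      then show ?thesis using hx[of u] by simp
    qed
    have F: "h *v (T *v x) = transpose T *v (h *v x)" if xU: "x \<in> U" for x
    proof -
      define u where "u = x - inner v x *\<^sub>R v - inner w x *\<^sub>R w"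
      have uU': "u \<in> U'"
      proof -
        have "u \<in> U" unfolding u_def using xU vU wU U by (simp add: subspace_diff subspace_scale)
        moreover have "inner v u = 0" unfolding u_def using vv vw by (simp add: inner_diff_right)
        moreover have "inner w u = 0" unfolding u_def using ww wv by (simp add: inner_diff_right)
        ultimately show ?thesis unfolding U'_def orthogonal_def by simp
      qed
      have xdec: "x = inner v x *\<^sub>R v + inner w x *\<^sub>R w + u" unfolding u_def by simp
      have Fv: "h *v (T *v v) = transpose T *v (h *v v)"
        unfolding hv Tv Ttv
        by (simp add: matrix_vector_right_distrib matrix_vector_mult_diff_distrib matrix_vector_mult_scaleR hv hw mv_neg vec_eq_iff)
      have Fw: "h *v (T *v w) = transpose T *v (h *v w)"
        unfolding hw Tw mv_neg Ttw
        by (simp add: matrix_vector_right_distrib matrix_vector_mult_diff_distrib matrix_vector_mult_scaleR hv hw mv_neg vec_eq_iff)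
      have Fu: "h *v (T *v u) = transpose T *v (h *v u)"
        using hu[OF uU'] hu[OF TU'[OF uU']] h'T[OF uU'] by simp
      have "h *v (T *v x) = h *v (T *v (inner v x *\<^sub>R v + inner w x *\<^sub>R w + u))"
        by (rule arg_cong[where f="\<lambda>y. h *v (T *v y)"], rule xdec)
      also have "\<dots> = transpose T *v (h *v (inner v x *\<^sub>R v + inner w x *\<^sub>R w + u))"
        by (simp only: matrix_vector_right_distrib matrix_vector_mult_scaleR Fv Fw Fu)
      also have "\<dots> = transpose T *v (h *v x)"
        by (rule arg_cong[where f="\<lambda>y. transpose T *v (h *v y)"], rule xdec[symmetric])
      finally show ?thesis .
    qed
    have G: "h *v x \<in> U" if xU: "x \<in> U" for x
    proof -
      define u where "u = x - inner v x *\<^sub>R v - inner w x *\<^sub>R w"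
      have uU': "u \<in> U'"
      proof -
        have "u \<in> U" unfolding u_def using xU vU wU U by (simp add: subspace_diff subspace_scale)
        moreover have "inner v u = 0" unfolding u_def using vv vw by (simp add: inner_diff_right)
        moreover have "inner w u = 0" unfolding u_def using ww wv by (simp add: inner_diff_right)
        ultimately show ?thesis unfolding U'_def orthogonal_def by simp
      qed
      have xdec: "x = inner v x *\<^sub>R v + inner w x *\<^sub>R w + u" unfolding u_def by simp
      have "h *v x = h *v (inner v x *\<^sub>R v + inner w x *\<^sub>R w + u)"
        by (rule arg_cong[where f="\<lambda>y. h *v y"], rule xdec)
      also have "\<dots> = inner v x *\<^sub>R v - inner w x *\<^sub>R w + h' *v u"
        by (simp only: matrix_vector_right_distrib matrix_vector_mult_scaleR hv hw hu[OF uU']) simp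
      finally have "h *v x = inner v x *\<^sub>R v - inner w x *\<^sub>R w + h' *v u" .
      moreover have "h' *v u \<in> U" using h'U[OF uU'] unfolding U'_def by simp
      ultimately show ?thesis using U vU wU by (simp add: subspace_add subspace_diff subspace_scale)
    qed
    have H: "h *v x = x" if "\<forall>u\<in>U. orthogonal u x" for x
    proof -
      have "h' *v x = x" by (rule h'id) (use that in \<open>auto simp: U'_def\<close>)
      moreover have "inner w x = 0" using that wU unfolding orthogonal_def by simp
      ultimately show ?thesis using hx[of x] by simp
    qed
    have ho: "orthogonal_matrix h" unfolding h_def by (intro orthogonal_matrix_mul refl_orth nw h'o)
    have hd: "det h = (-1) ^ Suc k" unfolding h_def by (simp add: det_mul refl_det[OF nw] h'd)
    show "\<exists>h. orthogonal_matrix h \<and> det h = (-1) ^ Suc k \<and> (\<forall>x\<in>U. h *v (T *v x) = transpose T *v (h *v x))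
       \<and> (\<forall>x\<in>U. h *v x \<in> U) \<and> (\<forall>x. (\<forall>u\<in>U. orthogonal u x) \<longrightarrow> h *v x = x)"
      using ho hd F G H by blast
  qed
qed

end


theorem proposition3p4:
  fixes T :: "real^'n^'n"
  assumes "T \<in> SO"
    and "\<not> mat_eigenvalue T 1"
    and "\<not> mat_eigenvalue T (-1)"
  shows "real_in SO T \<longleftrightarrow> CARD('n) mod 4 \<noteq> 2"
proof -
  have orthT: "orthogonal_matrix T" and detT: "det T = 1" using assms(1) by (auto simp: SO_def)
  have ne1: "T *v v = v \<Longrightarrow> v = 0" for v using assms(2) unfolding mat_eigenvalue_def by auto
  have nem1: "T *v v = - v \<Longrightarrow> v = 0" for v using assms(3) unfolding mat_eigenvalue_def by auto
  interpret oT T using orthT detT ne1 nem1 by unfold_locales auto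
  have ev: "even CARD('n)" by (rule n_even)
  have pre: "subspace (UNIV :: (real^'n) set) \<and> dim (UNIV :: (real^'n) set) = 2 * (CARD('n) div 2)
      \<and> (\<forall>x\<in>UNIV. T *v x \<in> UNIV) \<and> (\<forall>x\<in>UNIV. transpose T *v x \<in> UNIV)"
    using ev by simp
  obtain h0 where h0o: "orthogonal_matrix h0" and h0d: "det h0 = (-1) ^ (CARD('n) div 2)"
    and h0T0: "\<forall>x\<in>UNIV. h0 *v (T *v x) = transpose T *v (h0 *v x)"
    using constr[rule_format, OF pre] by blast
  have h0T: "h0 *v (T *v x) = transpose T *v (h0 *v x)" for x using h0T0 by simp
  have conj_iff: "h ** T ** matrix_inv h = matrix_inv T \<longleftrightarrow> (\<forall>x. h *v (T *v x) = transpose T *v (h *v x))"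
    if ho: "orthogonal_matrix h" for h
  proof
    assume eq: "h ** T ** matrix_inv h = matrix_inv T"
    then have eq': "h ** T ** transpose h = transpose T" using ho orthT by (simp add: minv_orth)
    show "\<forall>x. h *v (T *v x) = transpose T *v (h *v x)"
    proof
      fix x
      have "h *v (T *v x) = h *v (T *v (transpose h *v (h *v x)))" using orth_TQ[OF ho] by simp
      also have "\<dots> = (h ** T ** transpose h) *v (h *v x)" by (simp add: matrix_vector_mul_assoc[symmetric])
      also have "\<dots> = transpose T *v (h *v x)" by (simp only: eq')
      finally show "h *v (T *v x) = transpose T *v (h *v x)" .
    qed
  next
    assume eq: "\<forall>x. h *v (T *v x) = transpose T *v (h *v x)"
    have "h ** T ** transpose h = transpose T"
    proof (subst matrix_eq, intro allI)
      fix y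
      have "(h ** T ** transpose h) *v y = h *v (T *v (transpose h *v y))" by (simp add: matrix_vector_mul_assoc[symmetric])
      also have "\<dots> = transpose T *v y" using eq orth_QT[OF ho] by simp
      finally show "(h ** T ** transpose h) *v y = transpose T *v y" .
    qed
    then show "h ** T ** matrix_inv h = matrix_inv T" using ho orthT by (simp add: minv_orth)
  qed
  show ?thesis
  proof
    assume "real_in SO T"
    then obtain h where hSO: "h \<in> SO" and hc: "h ** T ** matrix_inv h = matrix_inv T"
      unfolding real_in_def by blast
    have ho: "orthogonal_matrix h" and hd: "det h = 1" using hSO by (auto simp: SO_def)
    have hT: "h *v (T *v x) = transpose T *v (h *v x)" for x using conj_iff[OF ho] hc by blast
    define c where "c = transpose h0 ** h"
    have co: "orthogonal_matrix c" unfolding c_def using h0o ho by (simp add: orthogonal_matrix_mul)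
    have key: "transpose h0 *v (transpose T *v y) = T *v (transpose h0 *v y)" for y
    proof -
      have "T *v (transpose h0 *v y) = transpose h0 *v (h0 *v (T *v (transpose h0 *v y)))"
        using orth_TQ[OF h0o] by simp
      also have "\<dots> = transpose h0 *v (transpose T *v (h0 *v (transpose h0 *v y)))" by (simp only: h0T)
      also have "\<dots> = transpose h0 *v (transpose T *v y)" using orth_QT[OF h0o] by simp
      finally show ?thesis by simp
    qed
    have cT: "c *v (T *v x) = T *v (c *v x)" for x
    proof -
      have "c *v (T *v x) = transpose h0 *v (h *v (T *v x))" by (simp add: c_def matrix_vector_mul_assoc[symmetric])
      also have "\<dots> = transpose h0 *v (transpose T *v (h *v x))" by (simp only: hT)
      also have "\<dots> = T *v (transpose h0 *v (h *v x))" by (rule key)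
      also have "\<dots> = T *v (c *v x)" by (simp add: c_def matrix_vector_mul_assoc[symmetric])
      finally show ?thesis .
    qed
    have "det c = 1" by (rule det_comm[OF co cT])
    then have "det h0 = 1" unfolding c_def by (simp add: det_mul hd)
    then have "(-1::real) ^ (CARD('n) div 2) = 1" using h0d by simp
    then have "even (CARD('n) div 2)" by (metis neg_one_odd_power one_neq_neg_one)
    then show "CARD('n) mod 4 \<noteq> 2" using ev by presburger
  next
    assume m: "CARD('n) mod 4 \<noteq> 2"
    have "even (CARD('n) div 2)" using m ev by presburger
    then have "det h0 = 1" using h0d by simp
    then have "h0 \<in> SO" using h0o by (simp add: SO_def)
    moreover have "h0 ** T ** matrix_inv h0 = matrix_inv T" using conj_iff[OF h0o] h0T by blast
    ultimately show "real_in SO T" unfolding real_in_def by blast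
  qed
qed

end
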